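(* Let $H=(T_1,\dots,T_n,p_1,\dots,p_n)$ be a strategic game. (i) If $\mathbf D(\beta)$ holds for all $\beta<\alpha$, then $\overline{GS}^{\alpha}=\overline{LS}^{\alpha}$. In particular, if $\mathbf D(\alpha)$ holds for all ordinals $\alpha$, then the outcomes of $\overline{GS}$ and $\overline{LS}$ coincide. (ii) If $\mathbf D(\alpha)$ holds for all ordinals $\alpha$, then $\overline{LS}$ is order independent. (iii) If $\mathbf D(\beta)$ holds for all $\beta<\alpha+1$, then $LS^{\alpha}=\overline{LS}^{\alpha}$. In particular, if $\mathbf D(\alpha)$ holds for all ordinals $\alpha$, then the outcome of $LS$ exists and equals the outcome of $\overline{LS}$.
   Context: A strategic game has nonempty strategy sets $T_i$ and real payoffs $p_i$. A restriction of $H$ is $G=(S_1,\dots,S_n)$ with $S_i\subseteq T_i$ (possibly empty), ordered componentwise (complete lattice with top $H$). For $s_i,s_i'\in T_i$, $s_i'\succ_G s_i$ means $p_i(s_i',s_{-i})>p_i(s_i,s_{-i})$ for all $s_{-i}\in\prod_{j\ne i}S_j$ (vacuous if empty). $GS(G):=(S_1',\dots,S_n')$ with $S_i':=\{s_i\in T_i\mid\neg\exists s_i'\in T_i:\ s_i'\succ_G s_i\}$; $LS(G):=(S_1',\dots,S_n')$ with $S_i':=\{s_i\in T_i\mid\neg\exists s_i'\in S_i:\ s_i'\succ_G s_i\}$; $\overline{T}(G):=T(G)\cap G$. Iterations: $T^0:=H$, $T^{\alpha+1}:=T(T^\alpha)$, $T^\beta:=\bigcap_{\alpha<\beta}T^\alpha$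 for limit $\beta$; outcome $T^{\alpha_T}$, $\alpha_T$ the least $\alpha$ with $T^{\alpha+1}=T^\alpha$. $R$ is a relaxation of $T$ if for all ordinals $\alpha$: (1) $T(R^\alpha)\subseteq R(R^\alpha)$; (2) if $T(R^\alpha)\subseteq R^\alpha$ then $R(R^\alpha)\subseteq R^\alpha$; (3) if $R(R^\alpha)=R^\alpha$ then $T(R^\alpha)=R^\alpha$. $T$ is order independent if the set of outcomes of relaxations of $T$ has at most one element. Property $\mathbf D(\alpha)$: for every relaxation $R$ of $\overline{LS}$, writing $R^\alpha=(S_1,\dots,S_n)$, every $i$ and every $s_i\in T_i$: if some $s_i'\in T_i$ has $s_i'\succ_{R^\alpha}s_i$, then some $s_i^*\in S_i$ has $s_i^*\succ_{R^\alpha}s_i$. *)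

theory Defs
  imports Complex_Main
begin

text \<open>
Strategic game: players form a finite (nonempty) type 'p, all strategies live in a
common type 'a, player i's strategy set is T i, and payoff p i takes a full strategy
profile 'p => 'a. A restriction is any G :: 'p => 'a set with G <= T (pointwise);
the componentwise order is the library order on functions, intersection is inf.
Ordinals are represented by the elements of a type 'o of class wellorder.
\<close>

type_synonym ('p, 'a) restr = "'p \<Rightarrow> 'a set"
type_synonym ('p, 'a) oper = "('p, 'a) restr \<Rightarrow> ('p, 'a) restr"

definition sdom :: "('p \<Rightarrow> ('p \<Rightarrow> 'a) \<Rightarrow> real) \<Rightarrow> ('p, 'a) restr \<Rightarrow> 'p \<Rightarrow> 'a \<Rightarrow> 'a \<Rightarrow> bool" where
  "sdom p G i s' s \<longleftrightarrow>
     (\<forall>t :: 'p \<Rightarrow> 'a. (\<forall>j. j \<noteq> i \<longrightarrow> t j \<in> G j) \<longrightarrow> p i (t(i := s')) > p i (t(i := s)))"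

definition GS :: "('p, 'a) restr \<Rightarrow> ('p \<Rightarrow> ('p \<Rightarrow> 'a) \<Rightarrow> real) \<Rightarrow> ('p, 'a) oper" where
  "GS T p G = (\<lambda>i. {s \<in> T i. \<not> (\<exists>s' \<in> T i. sdom p G i s' s)})"

definition LS :: "('p, 'a) restr \<Rightarrow> ('p \<Rightarrow> ('p \<Rightarrow> 'a) \<Rightarrow> real) \<Rightarrow> ('p, 'a) oper" where
  "LS T p G = (\<lambda>i. {s \<in> T i. \<not> (\<exists>s' \<in> G i. sdom p G i s' s)})"

definition bar :: "('p, 'a) oper \<Rightarrow> ('p, 'a) oper" where
  "bar F G = inf (F G) G"

text \<open>Transfinite iteration along the well-order 'o, starting at H:
  least element |-> H; successor of g |-> F (iterate g); limit |-> intersection of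
  all earlier stages.\<close>
definition is_pred :: "'o::wellorder \<Rightarrow> 'o \<Rightarrow> bool" where
  "is_pred g a \<longleftrightarrow> g < a \<and> (\<forall>d. g < d \<longrightarrow> a \<le> d)"

definition iter_step :: "('p, 'a) restr \<Rightarrow> ('p, 'a) oper \<Rightarrow> ('o::wellorder \<Rightarrow> ('p, 'a) restr) \<Rightarrow> 'o \<Rightarrow> ('p, 'a) restr" where
  "iter_step H F rec a =
     (if \<forall>b. \<not> b < a then H
      else if \<exists>g. is_pred g a then F (rec (THE g. is_pred g a))
      else (INF b \<in> {b. b < a}. rec b))"

definition iter :: "('p, 'a) restr \<Rightarrow> ('p, 'a) oper \<Rightarrow> 'o::wellorder \<Rightarrow> ('p, 'a) restr" where
  "iter H F = wfrec {(x, y). x < y} (iter_step H F)"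

definition stab :: "('p, 'a) restr \<Rightarrow> ('p, 'a) oper \<Rightarrow> 'o::wellorder \<Rightarrow> bool" where
  "stab H F a \<longleftrightarrow> F (iter H F a) = iter H F a"

definition has_outcome :: "('p, 'a) restr \<Rightarrow> ('p, 'a) oper \<Rightarrow> 'o::wellorder itself \<Rightarrow> bool" where
  "has_outcome H F _ \<longleftrightarrow> (\<exists>a::'o. stab H F a)"

definition outcome :: "('p, 'a) restr \<Rightarrow> ('p, 'a) oper \<Rightarrow> 'o::wellorder itself \<Rightarrow> ('p, 'a) restr" where
  "outcome H F _ = iter H F (LEAST a::'o. stab H F a)"

definition relaxation :: "('p, 'a) restr \<Rightarrow> ('p, 'a) oper \<Rightarrow> ('p, 'a) oper \<Rightarrow> 'o::wellorder itself \<Rightarrow> bool" where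
  "relaxation H Top R _ \<longleftrightarrow>
     (\<forall>G. G \<le> H \<longrightarrow> R G \<le> H) \<and>
     (\<forall>a::'o. let G = iter H R a in
        Top G \<le> R G \<and> (Top G \<le> G \<longrightarrow> R G \<le> G) \<and> (R G = G \<longrightarrow> Top G = G))"

definition order_independent :: "('p, 'a) restr \<Rightarrow> ('p, 'a) oper \<Rightarrow> 'o::wellorder itself \<Rightarrow> bool" where
  "order_independent H Top w \<longleftrightarrow>
     (\<forall>R1 R2. relaxation H Top R1 w \<and> has_outcome H R1 w \<and>
              relaxation H Top R2 w \<and> has_outcome H R2 w \<longrightarrow>
              outcome H R1 w = outcome H R2 w)"

definition propD :: "('p, 'a) restr \<Rightarrow> ('p \<Rightarrow> ('p \<Rightarrow> 'a) \<Rightarrow> real) \<Rightarrow> 'o::wellorder \<Rightarrow> bool" where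
  "propD T p a \<longleftrightarrow>
     (\<forall>R. relaxation T (bar (LS T p)) R TYPE('o) \<longrightarrow>
        (let G = iter T R a in
          \<forall>i s. s \<in> T i \<longrightarrow> (\<exists>s' \<in> T i. sdom p G i s' s) \<longrightarrow> (\<exists>s' \<in> G i. sdom p G i s' s)))"

text \<open>'o has enough ordinals: strictly larger cardinality than the set of restrictions.\<close>
definition large_ord :: "'o::wellorder itself \<Rightarrow> ('p, 'a) restr itself \<Rightarrow> bool" where
  "large_ord _ _ \<longleftrightarrow> \<not> (\<exists>f :: 'o \<Rightarrow> ('p, 'a) restr. inj f)"

lemma iter_unfold:
  "iter H F a = iter_step H F (\<lambda>b. if b < a then iter H F b else undefined) a"
  unfolding iter_def
  by (subst wfrec) (auto simp: wf wf_def cut_def intro: less_induct)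

end

theory Submission
  imports Defs
begin

lemma is_pred_unique: "is_pred g a \<Longrightarrow> is_pred g' a \<Longrightarrow> g = g'"
  unfolding is_pred_def by (metis leD linorder_neqE)

lemma iter_least: "(\<forall>b. \<not> b < a) \<Longrightarrow> iter H F (a::'o::wellorder) = H"
  by (subst iter_unfold) (simp add: iter_step_def)

lemma iter_succ: "is_pred g a \<Longrightarrow> iter H F (a::'o::wellorder) = F (iter H F g)"
proof -
  assume g: "is_pred g a"
  then have ga: "g < a" by (simp add: is_pred_def)
  have th: "(THE g. is_pred g a) = g" using g is_pred_unique by blast
  show ?thesis
    apply (subst iter_unfold)
    using g ga th by (auto simp: iter_step_def)
qed

lemma iter_limit: "b < a \<Longrightarrow> \<not>(\<exists>g. is_pred g a) \<Longrightarrow>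
   iter H F (a::'o::wellorder) = (INF b\<in>{b. b<a}. iter H F b)"
  apply (subst iter_unfold)
  apply (simp add: iter_step_def)
  by blast

lemma ord_induct:
  assumes "\<And>a. (\<forall>b. \<not> b < a) \<Longrightarrow> Q a"
    "\<And>g a. is_pred g a \<Longrightarrow> (\<And>b. b < a \<Longrightarrow> Q b) \<Longrightarrow> Q a"
    "\<And>a b. b < a \<Longrightarrow> \<not>(\<exists>g. is_pred g a) \<Longrightarrow> (\<And>b. b<a \<Longrightarrow> Q b) \<Longrightarrow> Q a"
  shows "Q (a::'o::wellorder)"
  by (induction a rule: less_induct) (metis assms)

lemma pred_le: "is_pred g a \<Longrightarrow> b < a \<Longrightarrow> b \<le> g"
  unfolding is_pred_def by (meson leD le_less_linear)

lemma succ_exists: "b < (a::'o::wellorder) \<Longrightarrow> is_pred b (LEAST d. b < d) \<and> (LEAST d. b<d) \<le> a"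
  unfolding is_pred_def by (metis LeastI Least_le)

lemma iter_le_H:
  assumes "\<forall>G. G \<le> H \<longrightarrow> F G \<le> H"
  shows "iter H F (a::'o::wellorder) \<le> H"
proof (induction a rule: ord_induct)
  case (1 a) then show ?case by (simp add: iter_least)
next
  case (2 g a) then show ?case using assms by (simp add: iter_succ is_pred_def)
next
  case (3 a b) then show ?case
    by (subst iter_limit[OF 3(1,2)]) (rule INF_lower2[of b]; simp)
qed

lemma iter_antitone:
  assumes dec: "\<forall>a. F (iter H F (a::'o::wellorder)) \<le> iter H F a"
  shows "b \<le> a \<Longrightarrow> iter H F (a::'o) \<le> iter H F b"
proof (induction a rule: ord_induct)
  case (1 a) then show ?case by (metis order.order_iff_strict order_refl)
next
  case (2 g a)
  show ?case
  proof (cases "b = a")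
    case False
    then have "b < a" using 2 by simp
    then have "b \<le> g" using 2 pred_le by blast
    moreover have "g < a" using 2 by (simp add: is_pred_def)
    ultimately have "iter H F g \<le> iter H F b" using 2 by blast
    then show ?thesis using dec iter_succ[OF 2(1)] by (metis order_trans)
  qed simp
next
  case (3 a c)
  show ?case
  proof (cases "b = a")
    case False
    then have "b < a" using 3 by simp
    then show ?thesis using 3
      by (subst iter_limit[OF 3(1,2)]) (rule INF_lower; simp)
  qed simp
qed

lemma stab_exists:
  fixes F :: "('p, 'a) oper"
  assumes dec: "\<forall>a. F (iter H F (a::'o::wellorder)) \<le> iter H F a"
    and large: "large_ord TYPE('o) TYPE(('p, 'a) restr)"
  shows "\<exists>a::'o. stab H F a"
proof (rule ccontr)
  assume ns: "\<not> (\<exists>a::'o. stab H F a)"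
  have lt: "iter H F a < iter H F b" if "b < a" for a b :: 'o
  proof -
    define s where "s = (LEAST d. b < d)"
    have sp: "is_pred b s" "s \<le> a" using succ_exists[OF that] s_def by auto
    have "iter H F s = F (iter H F b)" using iter_succ[OF sp(1)] .
    also have "\<dots> < iter H F b" using dec ns unfolding stab_def by (metis order_less_le)
    finally show ?thesis using iter_antitone[OF dec sp(2)] by (metis order_le_less_trans)
  qed
  have "inj (iter H F :: 'o \<Rightarrow> ('p, 'a) restr)"
  proof (rule injI)
    fix x y :: 'o assume "iter H F x = iter H F y"
    then show "x = y" using lt by (metis less_irrefl linorder_neqE)
  qed
  then show False using large unfolding large_ord_def by blast
qed


lemma GS_mono: "G \<le> G' \<Longrightarrow> GS T p G \<le> GS T p G'"
  unfolding GS_def sdom_def le_fun_def by (auto; blast)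

lemma GS_le_LS: "G \<le> T \<Longrightarrow> GS T p G \<le> LS T p G"
  unfolding GS_def LS_def le_fun_def by auto

lemma GS_le_T: "GS T p G \<le> T"
  unfolding GS_def le_fun_def by auto

lemma LS_le_T: "LS T p G \<le> T"
  unfolding LS_def le_fun_def by auto

lemma bar_le: "bar F G \<le> G"
  unfolding bar_def by simp

lemma relax_self: "relaxation T (bar (LS T p)) (bar (LS T p)) TYPE('o::wellorder)"
  unfolding relaxation_def Let_def using bar_le by (metis order_refl order_trans)

lemma relax_le_T: "relaxation H Top R w \<Longrightarrow> iter H R (a::'o::wellorder) \<le> H"
  unfolding relaxation_def by (intro iter_le_H) blast

lemma D_use:
  assumes "propD T p (a::'o::wellorder)" "relaxation T (bar (LS T p)) R TYPE('o)"
  shows "LS T p (iter T R a) \<le> GS T p (iter T R a)"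
proof -
  let ?G = "iter T R a"
  have D: "\<forall>i s. s \<in> T i \<longrightarrow> (\<exists>s' \<in> T i. sdom p ?G i s' s) \<longrightarrow> (\<exists>s' \<in> ?G i. sdom p ?G i s' s)"
    using assms unfolding propD_def Let_def by blast
  show ?thesis unfolding LS_def GS_def le_fun_def using D by blast
qed

lemma D_eq:
  assumes "propD T p (a::'o::wellorder)" "relaxation T (bar (LS T p)) R TYPE('o)"
  shows "LS T p (iter T R a) = GS T p (iter T R a)"
  using D_use[OF assms] GS_le_LS[OF relax_le_T[OF assms(2)]] by (rule order.antisym)

lemma GSbar_inv: "GS T p (iter T (bar (GS T p)) (a::'o::wellorder)) \<le> iter T (bar (GS T p)) a"
proof (induction a rule: ord_induct)
  case (1 a) then show ?case by (simp add: iter_least GS_le_T)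
next
  case (2 g a)
  let ?G = "iter T (bar (GS T p)) g"
  have ga: "g < a" using 2 by (simp add: is_pred_def)
  have e: "iter T (bar (GS T p)) a = inf (GS T p ?G) ?G" unfolding iter_succ[OF 2(1)] bar_def ..
  have "GS T p (iter T (bar (GS T p)) a) \<le> GS T p ?G" unfolding e by (rule GS_mono) simp
  moreover have "GS T p ?G \<le> ?G" using 2(2)[OF ga] .
  ultimately show ?case unfolding e by (simp del: inf_apply)
next
  case (3 a b)
  have e: "iter T (bar (GS T p)) a = (INF b\<in>{b. b<a}. iter T (bar (GS T p)) b)"
    by (rule iter_limit[OF 3(1,2)])
  show ?case unfolding e
  proof (rule INF_greatest)
    fix c assume "c \<in> {b. b < a}"
    then have c: "c < a" by simp
    have "GS T p (INF b\<in>{b. b<a}. iter T (bar (GS T p)) b) \<le> GS T p (iter T (bar (GS T p)) c)"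
      by (rule GS_mono) (rule INF_lower; simp add: c)
    also have "\<dots> \<le> iter T (bar (GS T p)) c" using 3(3)[OF c] .
    finally show "GS T p (INF b\<in>{b. b<a}. iter T (bar (GS T p)) b) \<le> iter T (bar (GS T p)) c" .
  qed
qed

lemma below_relax:
  assumes R: "relaxation T (bar (LS T p)) R TYPE('o::wellorder)"
    and X: "X \<le> T" "X \<le> GS T p X"
  shows "X \<le> iter T R (a::'o)"
proof (induction a rule: ord_induct)
  case (1 a) then show ?case by (simp add: iter_least X)
next
  case (2 g a)
  let ?G = "iter T R g"
  have ga: "g < a" using 2 by (simp add: is_pred_def)
  have XG: "X \<le> ?G" using 2(2)[OF ga] .
  have "X \<le> GS T p ?G" using X(2) GS_mono[OF XG] by (rule order_trans)
  also have "\<dots> \<le> LS T p ?G" by (rule GS_le_LS[OF relax_le_T[OF R]])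
  finally have "X \<le> bar (LS T p) ?G" using XG unfolding bar_def by simp
  also have "\<dots> \<le> R ?G" using R unfolding relaxation_def Let_def by blast
  finally show ?case by (simp add: iter_succ[OF 2(1)])
next
  case (3 a b)
  show ?case unfolding iter_limit[OF 3(1,2)]
    by (rule INF_greatest) (simp add: 3(3))
qed


theorem mainTheorem10:
  fixes T :: "'p::finite \<Rightarrow> 'a set" and p :: "'p \<Rightarrow> ('p \<Rightarrow> 'a) \<Rightarrow> real"
  assumes nonempty: "\<forall>i. T i \<noteq> {}"
    and large: "large_ord TYPE('o::wellorder) TYPE(('p, 'a) restr)"
  shows
    "(\<forall>a::'o. (\<forall>b<a. propD T p b) \<longrightarrow>
         iter T (bar (GS T p)) a = iter T (bar (LS T p)) a)
   \<and> ((\<forall>a::'o. propD T p a) \<longrightarrow>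
         has_outcome T (bar (GS T p)) TYPE('o) \<and> has_outcome T (bar (LS T p)) TYPE('o) \<and>
         outcome T (bar (GS T p)) TYPE('o) = outcome T (bar (LS T p)) TYPE('o))
   \<and> ((\<forall>a::'o. propD T p a) \<longrightarrow> order_independent T (bar (LS T p)) TYPE('o))
   \<and> (\<forall>a::'o. (\<forall>b\<le>a. propD T p b) \<longrightarrow>
         iter T (LS T p) a = iter T (bar (LS T p)) a)
   \<and> ((\<forall>a::'o. propD T p a) \<longrightarrow>
         has_outcome T (LS T p) TYPE('o) \<and>
         outcome T (LS T p) TYPE('o) = outcome T (bar (LS T p)) TYPE('o))"
proof -
  let ?GB = "bar (GS T p)" and ?LB = "bar (LS T p)" and ?LS = "LS T p"
  have RS: "relaxation T ?LB ?LB TYPE('o)" by (rule relax_self)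
  have P1: "(\<forall>b<a. propD T p b) \<longrightarrow> iter T ?GB a = iter T ?LB a" for a :: 'o
  proof (induction a rule: ord_induct)
    case (1 a) then show ?case by (simp add: iter_least)
  next
    case (2 g a)
    show ?case
    proof
      assume D: "\<forall>b<a. propD T p b"
      have ga: "g < a" using 2 by (simp add: is_pred_def)
      have IH: "iter T ?GB g = iter T ?LB g" using 2(2)[OF ga] D ga by auto
      have "LS T p (iter T ?LB g) = GS T p (iter T ?LB g)"
        using D_eq[OF _ RS] D ga by blast
      then show "iter T ?GB a = iter T ?LB a"
        by (simp add: iter_succ[OF 2(1)] IH bar_def)
    qed
  next
    case (3 a b)
    show ?case
    proof
      assume D: "\<forall>b<a. propD T p b"
      show "iter T ?GB a = iter T ?LB a"
        unfolding iter_limit[OF 3(1,2)]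
        by (rule INF_cong) (use 3(3) D in auto)
    qed
  qed
  have decG: "\<forall>a. ?GB (iter T ?GB (a::'o)) \<le> iter T ?GB a" by (simp add: bar_le)
  have decL: "\<forall>a. ?LB (iter T ?LB (a::'o)) \<le> iter T ?LB a" by (simp add: bar_le)
  have hoG: "has_outcome T ?GB TYPE('o)"
    unfolding has_outcome_def by (rule stab_exists[OF decG large])
  have hoL: "has_outcome T ?LB TYPE('o)"
    unfolding has_outcome_def by (rule stab_exists[OF decL large])
  have P2: "outcome T ?GB TYPE('o) = outcome T ?LB TYPE('o)" if Dall: "\<forall>a::'o. propD T p a"
  proof -
    have ie: "iter T ?GB = (iter T ?LB :: 'o \<Rightarrow> _)" using P1 Dall by auto
    have se: "stab T ?GB = (stab T ?LB :: 'o \<Rightarrow> bool)"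
    proof
      fix a :: 'o
      have "LS T p (iter T ?LB a) = GS T p (iter T ?LB a)" using D_eq[OF _ RS] Dall by blast
      then show "stab T ?GB a = stab T ?LB a" unfolding stab_def ie by (simp add: bar_def)
    qed
    show ?thesis unfolding outcome_def se ie ..
  qed
  have P3: "order_independent T ?LB TYPE('o)" if Dall: "\<forall>a::'o. propD T p a"
    unfolding order_independent_def
  proof (intro allI impI)
    fix R1 R2
    assume H: "relaxation T ?LB R1 TYPE('o) \<and> has_outcome T R1 TYPE('o) \<and>
              relaxation T ?LB R2 TYPE('o) \<and> has_outcome T R2 TYPE('o)"
    have key: "outcome T Ra TYPE('o) \<le> outcome T Rb TYPE('o)"
      if Ra: "relaxation T ?LB Ra TYPE('o)" "has_outcome T Ra TYPE('o)"
        and Rb: "relaxation T ?LB Rb TYPE('o)" for Ra Rb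
    proof -
      define c where "c = (LEAST a::'o. stab T Ra a)"
      have sc: "stab T Ra c" unfolding c_def using Ra(2) unfolding has_outcome_def
        by (metis LeastI)
      let ?O = "iter T Ra c"
      have "Ra ?O = ?O" using sc unfolding stab_def .
      then have "?LB ?O = ?O" using Ra(1) unfolding relaxation_def Let_def by blast
      then have "?O \<le> LS T p ?O" unfolding bar_def by (metis inf.absorb_iff1 inf_commute)
      also have "\<dots> \<le> GS T p ?O" by (rule D_use[OF _ Ra(1)]) (use Dall in blast)
      finally have X2: "?O \<le> GS T p ?O" .
      have X1: "?O \<le> T" by (rule relax_le_T[OF Ra(1)])
      show ?thesis unfolding outcome_def c_def[symmetric]
        by (rule below_relax[OF Rb X1 X2])
    qed
    show "outcome T R1 TYPE('o) = outcome T R2 TYPE('o)"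
      using key H by (meson order.antisym)
  qed
  have P4: "(\<forall>b\<le>a. propD T p b) \<longrightarrow> iter T ?LS a = iter T ?LB a" for a :: 'o
  proof (induction a rule: ord_induct)
    case (1 a) then show ?case by (simp add: iter_least)
  next
    case (2 g a)
    show ?case
    proof
      assume D: "\<forall>b\<le>a. propD T p b"
      have ga: "g < a" using 2 by (simp add: is_pred_def)
      have IH: "iter T ?LS g = iter T ?LB g" using 2(2)[OF ga] D ga by auto
      have GL: "iter T ?GB g = iter T ?LB g" using P1 D ga by auto
      have e1: "LS T p (iter T ?LB g) = GS T p (iter T ?LB g)"
        using D_eq[OF _ RS] D ga by auto
      have "GS T p (iter T ?LB g) \<le> iter T ?LB g" using GSbar_inv[of T p g] GL by simp
      then have "LS T p (iter T ?LB g) = ?LB (iter T ?LB g)"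
        using e1 unfolding bar_def by (simp add: inf.absorb1)
      then show "iter T ?LS a = iter T ?LB a"
        by (simp add: iter_succ[OF 2(1)] IH)
    qed
  next
    case (3 a b)
    show ?case
    proof
      assume D: "\<forall>b\<le>a. propD T p b"
      show "iter T ?LS a = iter T ?LB a"
        unfolding iter_limit[OF 3(1,2)]
        by (rule INF_cong) (use 3(3) D in auto)
    qed
  qed
  have P5: "has_outcome T ?LS TYPE('o) \<and> outcome T ?LS TYPE('o) = outcome T ?LB TYPE('o)"
    if Dall: "\<forall>a::'o. propD T p a"
  proof -
    have ie: "iter T ?LS = (iter T ?LB :: 'o \<Rightarrow> _)" using P4 Dall by auto
    have se: "stab T ?LS = (stab T ?LB :: 'o \<Rightarrow> bool)"
    proof
      fix a :: 'o
      have GL: "iter T ?GB a = iter T ?LB a" using P1 Dall by auto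
      have e1: "LS T p (iter T ?LB a) = GS T p (iter T ?LB a)" using D_eq[OF _ RS] Dall by blast
      have "GS T p (iter T ?LB a) \<le> iter T ?LB a" using GSbar_inv[of T p a] GL by simp
      then have "LS T p (iter T ?LB a) = ?LB (iter T ?LB a)"
        using e1 unfolding bar_def by (simp add: inf.absorb1)
      then show "stab T ?LS a = stab T ?LB a" unfolding stab_def ie by simp
    qed
    show ?thesis using hoL unfolding has_outcome_def outcome_def se ie by simp
  qed
  show ?thesis using P1 hoG hoL P2 P3 P4 P5 by blast
qed

end
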